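(* Let $\kappa$ be an uncountable regular cardinal and let $\mathcal{I}$ be a $\kappa$-complete proper ideal on $\kappa$ containing every bounded subset of $\kappa$, and suppose $\mathcal{I}$ contains an unbounded subset of $\kappa$. Let $\nu\in\{2,\kappa\}$. Then: (1) every nonempty $A\subseteq{}^{\kappa}\nu$ is an $\mathcal{I}$-continuous image of ${}^{\kappa}\kappa$; (2) every $A\subseteq{}^{\kappa}\nu$ is an injective $\mathcal{I}$-continuous image of some $\mathcal{I}$-closed set $C\subseteq{}^{\kappa}\kappa$, i.e. there is an $\mathcal{I}$-continuous function $\Phi$ defined on $C$ (with the subspace topology) that is injective and satisfies $\Phi(C)=A$.
   Context: For $\mu\in\{2,\kappa\}$, ${}^{\kappa}\mu$ is the set of functions $\kappa\to\mu$ with the topology $\tau_{\mathcal{I}}$ generated by the sets $\mathbf{N}_f=\{x:f\subseteq x\}$ for $f\colon D\to\mu$, $D\in\mathcal{I}$. $\mathcal{I}$-continuous means continuous with respect to these topologies; $\mathcal{I}$-closed means $\tau_{\mathcal{I}}$-closed. In (1), $A$ being an $\mathcal{I}$-continuous image of ${}^{\kappa}\kappa$ means there is an $\mathcal{I}$-continuous surjection ${}^{\kappa}\kappa\to A$. *)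

theory Defs
  imports "HOL-Analysis.Analysis"
begin

text \<open>The cardinal kappa is represented by a type 'k carrying a cardinal order r
  (a well-order on UNIV which is minimal among well-orders of the same size).
  Ordinals below kappa are the elements of 'k, ordered by r.\<close>

definition bounded_in :: "'k rel \<Rightarrow> 'k set \<Rightarrow> bool" where
  "bounded_in r X \<longleftrightarrow> (\<exists>b. \<forall>a\<in>X. (a, b) \<in> r)"

definition is_ideal :: "'k set set \<Rightarrow> bool" where
  "is_ideal I \<longleftrightarrow> {} \<in> I \<and> (\<forall>X\<in>I. \<forall>Y. Y \<subseteq> X \<longrightarrow> Y \<in> I)
     \<and> (\<forall>X\<in>I. \<forall>Y\<in>I. X \<union> Y \<in> I)"

definition kappa_complete :: "'k rel \<Rightarrow> 'k set set \<Rightarrow> bool" where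
  "kappa_complete r I \<longleftrightarrow> (\<forall>F. F \<subseteq> I \<and> (card_of F, r) \<in> ordLess \<longrightarrow> \<Union>F \<in> I)"

text \<open>A function f : D -> mu is
  represented by (D, g) with g a total function, only g restricted to D matters.\<close>
definition ideal_top :: "'k set set \<Rightarrow> ('k \<Rightarrow> 'v) topology" where
  "ideal_top I = topology_generated_by {{x. \<forall>i\<in>D. x i = g i} | D g. D \<in> I}"

end

theory Submission
  imports Defs
begin

lemma topspace_it:
  assumes "{} \<in> I" shows "topspace (ideal_top I) = UNIV"
  unfolding ideal_top_def topology_generated_by_topspace
  using assms by blast

lemma open_sat:
  assumes X: "X \<in> I" and sat: "\<And>y z. y \<in> V \<Longrightarrow> (\<forall>i\<in>X. z i = y i) \<Longrightarrow> z \<in> V"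
  shows "openin (ideal_top I) V"
proof -
  have eq: "V = \<Union>((\<lambda>y. {z. \<forall>i\<in>X. z i = y i}) ` V)" using sat by auto
  have o: "openin (ideal_top I) {z. \<forall>i\<in>X. z i = y i}" for y
    unfolding ideal_top_def by (rule topology_generated_by_Basis) (use X in blast)
  have "openin (ideal_top I) (\<Union>((\<lambda>y. {z. \<forall>i\<in>X. z i = y i}) ` V))"
    by (rule openin_Union) (use o in blast)
  then show ?thesis using eq by simp
qed

lemma cont_sat:
  assumes I: "{} \<in> I" and J: "{} \<in> J" and X: "X \<in> I" and dep: "\<And>x y. (\<forall>i\<in>X. x i = y i) \<Longrightarrow> \<Phi> x = \<Phi> y"
  shows "continuous_map (ideal_top I) (ideal_top J) \<Phi>"
proof -
  have "openin (ideal_top I) {x \<in> topspace (ideal_top I). \<Phi> x \<in> U}" for U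
  proof (rule open_sat[OF X])
    fix y z assume y: "y \<in> {x \<in> topspace (ideal_top I). \<Phi> x \<in> U}" and zy: "\<forall>i\<in>X. z i = y i"
    from zy have "\<Phi> z = \<Phi> y" by (rule dep)
    then show "z \<in> {x \<in> topspace (ideal_top I). \<Phi> x \<in> U}" using y by (simp add: topspace_it[OF I])
  qed
  moreover have "\<Phi> x \<in> topspace (ideal_top J)" for x using topspace_it J by blast
  ultimately show ?thesis unfolding continuous_map_def by blast
qed

lemma refl_r: "card_order r \<Longrightarrow> (a,a) \<in> r"
  by (meson card_order_on_well_order_on well_order_on_def linear_order_on_def
      partial_order_on_def preorder_on_def refl_onD UNIV_I)

lemma total_r: "card_order r \<Longrightarrow> a \<noteq> b \<Longrightarrow> (a,b) \<in> r \<or> (b,a) \<in> r"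
  by (meson card_order_on_well_order_on well_order_on_def linear_order_on_def
      total_on_def UNIV_I)

lemma big:
  fixes r :: "'k rel"
  assumes card: "card_order r" and reg: "regularCard r" and nb: "\<not> bounded_in r X"
  shows "\<exists>h::'k \<Rightarrow> 'k. inj h \<and> range h = X"
proof -
  have F: "Field r = UNIV" using card card_order_on_Card_order by blast
  have "cofinal X r" unfolding cofinal_def
  proof
    fix a assume "a \<in> Field r"
    from nb obtain b where "b \<in> X" "(b,a) \<notin> r" unfolding bounded_in_def by blast
    then show "\<exists>b\<in>X. a \<noteq> b \<and> (a, b) \<in> r"
      using refl_r[OF card] total_r[OF card] by metis
  qed
  then have "(card_of X, r) \<in> ordIso" using reg F unfolding regularCard_def by blast
  moreover have "(r, card_of (UNIV :: 'k set)) \<in> ordIso" using card card_of_unique by blast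
  ultimately have "(card_of (UNIV :: 'k set), card_of X) \<in> ordIso" using ordIso_transitive ordIso_symmetric by blast
  then obtain h where "bij_betw h (UNIV::'k set) X" using card_of_ordIso by blast
  then show ?thesis unfolding bij_betw_def by blast
qed

lemma part1:
  fixes emb :: "('k \<Rightarrow> 'v) \<Rightarrow> ('k \<Rightarrow> 'k)" and h :: "'k \<Rightarrow> 'k"
  assumes I0: "{} \<in> I" and X: "X \<in> I" and h: "inj h" "range h \<subseteq> X" and emb: "inj emb"
    and A: "A \<noteq> {}"
  shows "\<exists>\<Phi>::('k\<Rightarrow>'k)\<Rightarrow>('k\<Rightarrow>'v). continuous_map (ideal_top I) (ideal_top I) \<Phi> \<and> \<Phi> ` UNIV = A"
proof -
  define S where "S g = (if g \<in> emb ` A then inv_into A emb g else (SOME a. a \<in> A))" for g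
  define \<Phi> where "\<Phi> x = S (x \<circ> h)" for x
  have c: "continuous_map (ideal_top I) (ideal_top I) \<Phi>"
  proof (rule cont_sat[OF I0 I0 X])
    fix x y :: "'k \<Rightarrow> 'k" assume "\<forall>i\<in>X. x i = y i"
    then have "x \<circ> h = y \<circ> h" using h by (auto simp: fun_eq_iff)
    then show "\<Phi> x = \<Phi> y" unfolding \<Phi>_def by simp
  qed
  have "\<Phi> ` UNIV \<subseteq> A" unfolding \<Phi>_def S_def using A
    by (auto simp: inv_into_into some_in_eq)
  moreover have "A \<subseteq> \<Phi> ` UNIV"
  proof
    fix a assume a: "a \<in> A"
    define x where "x i = emb a (inv h i)" for i
    have "x \<circ> h = emb a" using h unfolding x_def by auto
    then have "\<Phi> x = a" unfolding \<Phi>_def S_def using a emb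
      by (simp add: inv_into_f_f inj_on_subset)
    then show "a \<in> \<Phi> ` UNIV" by (metis rangeI)
  qed
  ultimately show ?thesis using c by blast
qed

lemma part2:
  fixes emb :: "('k \<Rightarrow> 'v) \<Rightarrow> ('k \<Rightarrow> 'k)" and h :: "'k \<Rightarrow> 'k"
  assumes I0: "{} \<in> I" and X: "X \<in> I" and h: "inj h" "range h = X" and emb: "inj emb"
    and sing: "\<And>j. {j} \<in> I"
  shows "\<exists>(C :: ('k \<Rightarrow> 'k) set) (\<Phi> :: ('k \<Rightarrow> 'k) \<Rightarrow> ('k \<Rightarrow> 'v)).
            closedin (ideal_top I) C \<and>
            continuous_map (subtopology (ideal_top I) C) (ideal_top I) \<Phi> \<and>
            inj_on \<Phi> C \<and> \<Phi> ` C = A"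
proof -
  define C where "C = {x :: 'k \<Rightarrow> 'k. x \<circ> h \<in> emb ` A \<and> (\<forall>j. j \<notin> X \<longrightarrow> x j = undefined)}"
  define \<Phi> where "\<Phi> x = inv_into A emb (x \<circ> h)" for x :: "'k \<Rightarrow> 'k"
  have injA: "inj_on emb A" by (meson emb inj_on_subset subset_UNIV)
  have c: "continuous_map (ideal_top I) (ideal_top I) \<Phi>"
  proof (rule cont_sat[OF I0 I0 X])
    fix x y :: "'k \<Rightarrow> 'k" assume "\<forall>i\<in>X. x i = y i"
    then have "x \<circ> h = y \<circ> h" using h by (auto simp: fun_eq_iff)
    then show "\<Phi> x = \<Phi> y" unfolding \<Phi>_def by simp
  qed
  have top: "topspace (ideal_top I) = (UNIV :: ('k \<Rightarrow> 'k) set)" by (rule topspace_it[OF I0])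
  have op: "openin (ideal_top I) (- C)"
  proof (subst openin_subopen, intro ballI)
    fix y assume y: "y \<in> - C"
    show "\<exists>T. openin (ideal_top I) T \<and> y \<in> T \<and> T \<subseteq> - C"
    proof (cases "y \<circ> h \<in> emb ` A")
      case False
      let ?T = "{z :: 'k \<Rightarrow> 'k. \<forall>i\<in>X. z i = y i}"
      have "openin (ideal_top I) ?T"
        unfolding ideal_top_def by (rule topology_generated_by_Basis) (use X in blast)
      moreover have "?T \<subseteq> - C"
      proof
        fix z assume "z \<in> ?T"
        then have "z \<circ> h = y \<circ> h" using h by (auto simp: fun_eq_iff)
        then show "z \<in> - C" using False unfolding C_def by auto
      qed
      ultimately show ?thesis by auto
    next
      case True
      then obtain j where j: "j \<notin> X" "y j \<noteq> undefined" using y unfolding C_def by auto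
      let ?T = "{z :: 'k \<Rightarrow> 'k. \<forall>i\<in>{j}. z i = y i}"
      have "openin (ideal_top I) ?T"
        unfolding ideal_top_def by (rule topology_generated_by_Basis) (use sing in blast)
      moreover have "?T \<subseteq> - C" using j unfolding C_def by auto
      ultimately show ?thesis by auto
    qed
  qed
  have cl: "closedin (ideal_top I) C"
    unfolding closedin_def top using op by (simp add: Compl_eq_Diff_UNIV)
  have c2: "continuous_map (subtopology (ideal_top I) C) (ideal_top I) \<Phi>"
    by (rule continuous_map_from_subtopology[OF c])
  have inj: "inj_on \<Phi> C"
  proof (rule inj_onI)
    fix x y assume x: "x \<in> C" and y: "y \<in> C" and e: "\<Phi> x = \<Phi> y"
    from x obtain a where a: "a \<in> A" "x \<circ> h = emb a" unfolding C_def by auto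
    from y obtain b where b: "b \<in> A" "y \<circ> h = emb b" unfolding C_def by auto
    have "a = b" using e a b injA unfolding \<Phi>_def by (simp add: inv_into_f_f)
    then have xy: "x \<circ> h = y \<circ> h" using a b by simp
    show "x = y"
    proof
      fix i show "x i = y i"
      proof (cases "i \<in> X")
        case True
        then obtain k where "i = h k" using h by auto
        then show ?thesis using xy by (metis comp_apply)
      next
        case False
        then show ?thesis using x y unfolding C_def by auto
      qed
    qed
  qed
  have "\<Phi> ` C \<subseteq> A" unfolding \<Phi>_def C_def using injA
    by (auto simp: inv_into_f_f)
  moreover have "A \<subseteq> \<Phi> ` C"
  proof
    fix a assume a: "a \<in> A"
    define x where "x i = (if i \<in> X then emb a (inv h i) else undefined)" for i
    have xh: "x \<circ> h = emb a" using h unfolding x_def by auto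
    then have "x \<in> C" unfolding C_def x_def using a by auto
    moreover have "\<Phi> x = a" unfolding \<Phi>_def using xh a injA
      by (simp add: inv_into_f_f)
    ultimately show "a \<in> \<Phi> ` C" by (metis imageI)
  qed
  ultimately show ?thesis using cl c2 inj by blast
qed

theorem proposition5p5:
  fixes r :: "'k rel" and I :: "'k set set"
  assumes card: "card_order r"
    and uncountable: "(natLeq, r) \<in> ordLess"
    and regular: "regularCard r"
    and ideal: "is_ideal I"
    and complete: "kappa_complete r I"
    and proper: "UNIV \<notin> I"
    and bounded: "\<forall>X. bounded_in r X \<longrightarrow> X \<in> I"
    and unbounded: "\<exists>X\<in>I. \<not> bounded_in r X"
  shows
   "(\<forall>A :: ('k \<Rightarrow> bool) set. A \<noteq> {} \<longrightarrow>
        (\<exists>\<Phi> :: ('k \<Rightarrow> 'k) \<Rightarrow> ('k \<Rightarrow> bool).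
            continuous_map (ideal_top I) (ideal_top I) \<Phi> \<and> \<Phi> ` UNIV = A))
  \<and> (\<forall>A :: ('k \<Rightarrow> 'k) set. A \<noteq> {} \<longrightarrow>
        (\<exists>\<Phi> :: ('k \<Rightarrow> 'k) \<Rightarrow> ('k \<Rightarrow> 'k).
            continuous_map (ideal_top I) (ideal_top I) \<Phi> \<and> \<Phi> ` UNIV = A))
  \<and> (\<forall>A :: ('k \<Rightarrow> bool) set.
        \<exists>(C :: ('k \<Rightarrow> 'k) set) (\<Phi> :: ('k \<Rightarrow> 'k) \<Rightarrow> ('k \<Rightarrow> bool)).
            closedin (ideal_top I) C \<and>
            continuous_map (subtopology (ideal_top I) C) (ideal_top I) \<Phi> \<and>
            inj_on \<Phi> C \<and> \<Phi> ` C = A)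
  \<and> (\<forall>A :: ('k \<Rightarrow> 'k) set.
        \<exists>(C :: ('k \<Rightarrow> 'k) set) (\<Phi> :: ('k \<Rightarrow> 'k) \<Rightarrow> ('k \<Rightarrow> 'k)).
            closedin (ideal_top I) C \<and>
            continuous_map (subtopology (ideal_top I) C) (ideal_top I) \<Phi> \<and>
            inj_on \<Phi> C \<and> \<Phi> ` C = A)"
proof -
  have I0: "{} \<in> I" using ideal unfolding is_ideal_def by blast
  have sing: "{j} \<in> I" for j
    using bounded refl_r[OF card] unfolding bounded_in_def by blast
  obtain X where X: "X \<in> I" "\<not> bounded_in r X" using unbounded by blast
  obtain h :: "'k \<Rightarrow> 'k" where h: "inj h" "range h = X" using big[OF card regular X(2)] by blast
  obtain c0 :: 'k where True by blast
  obtain c1 where "c1 \<in> X" "(c1,c0) \<notin> r" using X(2) unfolding bounded_in_def by blast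
  then have c1: "c1 \<noteq> c0" using refl_r[OF card] by blast
  define embB :: "('k \<Rightarrow> bool) \<Rightarrow> ('k \<Rightarrow> 'k)" where
    "embB f = (\<lambda>i. if f i then c1 else c0)" for f
  have iB: "inj embB"
  proof (rule injI)
    fix f g assume eq: "embB f = embB g"
    show "f = g"
    proof
      fix i
      have "embB f i = embB g i" by (simp add: eq)
      then show "f i = g i" using c1 unfolding embB_def by (auto split: if_splits)
    qed
  qed
  have iK: "inj (id :: ('k \<Rightarrow> 'k) \<Rightarrow> ('k \<Rightarrow> 'k))" by simp
  show ?thesis
  proof (intro conjI allI impI)
    fix A :: "('k \<Rightarrow> bool) set" assume A: "A \<noteq> {}"
    show "\<exists>\<Phi> :: ('k \<Rightarrow> 'k) \<Rightarrow> ('k \<Rightarrow> bool).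
            continuous_map (ideal_top I) (ideal_top I) \<Phi> \<and> \<Phi> ` UNIV = A"
      by (rule part1[OF I0 X(1) h(1) _ iB A]) (use h(2) in simp)
  next
    fix A :: "('k \<Rightarrow> 'k) set" assume A: "A \<noteq> {}"
    show "\<exists>\<Phi> :: ('k \<Rightarrow> 'k) \<Rightarrow> ('k \<Rightarrow> 'k).
            continuous_map (ideal_top I) (ideal_top I) \<Phi> \<and> \<Phi> ` UNIV = A"
      by (rule part1[OF I0 X(1) h(1) _ iK A]) (use h(2) in simp)
  next
    fix A :: "('k \<Rightarrow> bool) set"
    show "\<exists>(C :: ('k \<Rightarrow> 'k) set) (\<Phi> :: ('k \<Rightarrow> 'k) \<Rightarrow> ('k \<Rightarrow> bool)).
            closedin (ideal_top I) C \<and>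
            continuous_map (subtopology (ideal_top I) C) (ideal_top I) \<Phi> \<and>
            inj_on \<Phi> C \<and> \<Phi> ` C = A"
      by (rule part2[OF I0 X(1) h iB sing])
  next
    fix A :: "('k \<Rightarrow> 'k) set"
    show "\<exists>(C :: ('k \<Rightarrow> 'k) set) (\<Phi> :: ('k \<Rightarrow> 'k) \<Rightarrow> ('k \<Rightarrow> 'k)).
            closedin (ideal_top I) C \<and>
            continuous_map (subtopology (ideal_top I) C) (ideal_top I) \<Phi> \<and>
            inj_on \<Phi> C \<and> \<Phi> ` C = A"
      by (rule part2[OF I0 X(1) h iK sing])
  qed
qed

end
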